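(* Under assumptions (A2) and (A3) below: (i) the mixing time of the Markov chain $MC_0$ is at most $2\eta^2$; (ii) the mixing time of $MC_1$ is at most $2\eta^2$; (iii) the mixing times of $MC_{2,odd}$ and $MC_{2,even}$ are both at most $\eta^2+1$.
   Context: Block MDP: finite $\mathcal S$ ($|\mathcal S|=S$), $\mathcal X$ ($|\mathcal X|=n$), $\mathcal A$ ($|\mathcal A|=A$), initial context distribution $\mu$, latent transitions $p$, decoding $f$, emissions $q(\cdot|s)$ supported on $f^{-1}(s)$, with $|f^{-1}(s)|=\alpha_sn$, $\alpha_s>0$, $\sum_s\alpha_s=1$; $P(y|x,a)=q(y|f(y))p(f(y)|f(x),a)$; behavior policy $\pi(a|x)$. (A2): there is $\eta>1$ with $\alpha_{s_1}/\alpha_{s_2}\le\eta$; $p(s_2|s_1,a)/p(s_3|s_1,a)\le\eta$, $p(s_1|s_2,a)/p(s_1|s_3,a)\le\eta$; $q(x|s)/q(y|s)\le\eta$ for $x,y\in f^{-1}(s)$; $\pi(a_1|x)/\pi(a_2|y)\le\eta$. (A3): $\mu(x)=1/n$. Chains: $MC_0$ on $\mathcal X$ with kernel $P_0(y|x)=\sum_a\pi(a|x)P(y|x,a)$ and initial distribution $\mu$. $MC_1$ on $\mathcal A\times\mathcal X$ with kernel $P_1((b,y)|(a,x))=\pi(b|x)P(y|x,b)$ and initial distribution $\mu_1(a,x)=\sum_y\mu(y)\pi(a|y)P(x|y,a)$. $MC_{2,odd}$ and $MC_{2,even}$ on $\mathcal X\times\mathcal A\times\mathcal X$ share the kernel $P_2^2((y,b,y')|(x,a,x'))=\sum_{\tilde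 a}\pi(b|y)P(y'|y,b)\pi(\tilde a|x')P(y|x',\tilde a)$, with initial distributions $\mu_{2,odd}(x,a,x')=\mu(x)\pi(a|x)P(x'|x,a)$ and $\mu_{2,even}(x,a,x')=\sum_{y,b}\mu(y)\pi(b|y)P(x|y,b)\pi(a|x)P(x'|x,a)$. For an irreducible aperiodic chain with initial distribution $\nu$, kernel $Q$ and stationary distribution $\Pi$, the mixing time is $\inf\{h\ge1:d_{TV}(\nu Q^h,\Pi)\le1/4\}$. *)

theory Defs
  imports Complex_Main
begin

text \<open>A kernel Q on a finite state type is a function Q x y = Q(y|x).
  A distribution is a function nu :: 'st => real.\<close>

definition mc_step :: "('st::finite \<Rightarrow> real) \<Rightarrow> ('st \<Rightarrow> 'st \<Rightarrow> real) \<Rightarrow> ('st \<Rightarrow> real)" where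
  "mc_step \<nu> Q = (\<lambda>y. \<Sum>x\<in>UNIV. \<nu> x * Q x y)"

definition mc_dist :: "('st::finite \<Rightarrow> real) \<Rightarrow> ('st \<Rightarrow> 'st \<Rightarrow> real) \<Rightarrow> nat \<Rightarrow> ('st \<Rightarrow> real)" where
  "mc_dist \<nu> Q h = ((\<lambda>\<mu>. mc_step \<mu> Q) ^^ h) \<nu>"

definition d_TV :: "('st::finite \<Rightarrow> real) \<Rightarrow> ('st \<Rightarrow> real) \<Rightarrow> real" where
  "d_TV \<nu> \<Pi> = (1/2) * (\<Sum>x\<in>UNIV. \<bar>\<nu> x - \<Pi> x\<bar>)"

definition stationary_dist :: "('st::finite \<Rightarrow> 'st \<Rightarrow> real) \<Rightarrow> ('st \<Rightarrow> real) \<Rightarrow> bool" where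
  "stationary_dist Q \<Pi> \<longleftrightarrow> (\<forall>x. 0 \<le> \<Pi> x) \<and> (\<Sum>x\<in>UNIV. \<Pi> x) = 1 \<and> mc_step \<Pi> Q = \<Pi>"

text \<open>The set defining the mixing time is nonempty (so the infimum is attained).\<close>
definition mixing_time_finite :: "('st::finite \<Rightarrow> real) \<Rightarrow> ('st \<Rightarrow> 'st \<Rightarrow> real) \<Rightarrow> ('st \<Rightarrow> real) \<Rightarrow> bool" where
  "mixing_time_finite \<nu> Q \<Pi> \<longleftrightarrow> (\<exists>h\<ge>1. d_TV (mc_dist \<nu> Q h) \<Pi> \<le> 1/4)"

definition mixing_time :: "('st::finite \<Rightarrow> real) \<Rightarrow> ('st \<Rightarrow> 'st \<Rightarrow> real) \<Rightarrow> ('st \<Rightarrow> real) \<Rightarrow> nat" where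
  "mixing_time \<nu> Q \<Pi> = (LEAST h. 1 \<le> h \<and> d_TV (mc_dist \<nu> Q h) \<Pi> \<le> 1/4)"

text \<open>p s a s' = p(s'|s,a);  q s x = q(x|s);  pi x a = pi(a|x); P_bmdp x a y = P(y|x,a).\<close>

definition P_bmdp :: "('x \<Rightarrow> 's) \<Rightarrow> ('s \<Rightarrow> 'a \<Rightarrow> 's \<Rightarrow> real) \<Rightarrow> ('s \<Rightarrow> 'x \<Rightarrow> real) \<Rightarrow> 'x \<Rightarrow> 'a \<Rightarrow> 'x \<Rightarrow> real" where
  "P_bmdp f p q x a y = q (f y) y * p (f x) a (f y)"

definition alpha :: "('x::finite \<Rightarrow> 's) \<Rightarrow> 's \<Rightarrow> real" where
  "alpha f s = real (card {x. f x = s}) / real (card (UNIV :: 'x set))"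

definition P0 :: "('x::finite \<Rightarrow> 's) \<Rightarrow> ('s \<Rightarrow> 'a::finite \<Rightarrow> 's \<Rightarrow> real) \<Rightarrow> ('s \<Rightarrow> 'x \<Rightarrow> real) \<Rightarrow> ('x \<Rightarrow> 'a \<Rightarrow> real) \<Rightarrow> 'x \<Rightarrow> 'x \<Rightarrow> real" where
  "P0 f p q \<pi> x y = (\<Sum>a\<in>UNIV. \<pi> x a * P_bmdp f p q x a y)"

definition P1 :: "('x::finite \<Rightarrow> 's) \<Rightarrow> ('s \<Rightarrow> 'a::finite \<Rightarrow> 's \<Rightarrow> real) \<Rightarrow> ('s \<Rightarrow> 'x \<Rightarrow> real) \<Rightarrow> ('x \<Rightarrow> 'a \<Rightarrow> real) \<Rightarrow> ('a \<times> 'x) \<Rightarrow> ('a \<times> 'x) \<Rightarrow> real" where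
  "P1 f p q \<pi> ax by' = (case ax of (a, x) \<Rightarrow> case by' of (b, y) \<Rightarrow> \<pi> x b * P_bmdp f p q x b y)"

definition mu1 :: "('x::finite \<Rightarrow> 's) \<Rightarrow> ('s \<Rightarrow> 'a::finite \<Rightarrow> 's \<Rightarrow> real) \<Rightarrow> ('s \<Rightarrow> 'x \<Rightarrow> real) \<Rightarrow> ('x \<Rightarrow> 'a \<Rightarrow> real) \<Rightarrow> ('x \<Rightarrow> real) \<Rightarrow> ('a \<times> 'x) \<Rightarrow> real" where
  "mu1 f p q \<pi> \<mu> ax = (case ax of (a, x) \<Rightarrow> \<Sum>y\<in>UNIV. \<mu> y * \<pi> y a * P_bmdp f p q y a x)"

definition P2sq :: "('x::finite \<Rightarrow> 's) \<Rightarrow> ('s \<Rightarrow> 'a::finite \<Rightarrow> 's \<Rightarrow> real) \<Rightarrow> ('s \<Rightarrow> 'x \<Rightarrow> real) \<Rightarrow> ('x \<Rightarrow> 'a \<Rightarrow> real) \<Rightarrow> ('x \<times> 'a \<times> 'x) \<Rightarrow> ('x \<times> 'a \<times> 'x) \<Rightarrow> real" where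
  "P2sq f p q \<pi> s t = (case s of (x, a, x') \<Rightarrow> case t of (y, b, y') \<Rightarrow>
      (\<Sum>a'\<in>UNIV. \<pi> y b * P_bmdp f p q y b y' * \<pi> x' a' * P_bmdp f p q x' a' y))"

definition mu2odd :: "('x::finite \<Rightarrow> 's) \<Rightarrow> ('s \<Rightarrow> 'a::finite \<Rightarrow> 's \<Rightarrow> real) \<Rightarrow> ('s \<Rightarrow> 'x \<Rightarrow> real) \<Rightarrow> ('x \<Rightarrow> 'a \<Rightarrow> real) \<Rightarrow> ('x \<Rightarrow> real) \<Rightarrow> ('x \<times> 'a \<times> 'x) \<Rightarrow> real" where
  "mu2odd f p q \<pi> \<mu> s = (case s of (x, a, x') \<Rightarrow> \<mu> x * \<pi> x a * P_bmdp f p q x a x')"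

definition mu2even :: "('x::finite \<Rightarrow> 's) \<Rightarrow> ('s \<Rightarrow> 'a::finite \<Rightarrow> 's \<Rightarrow> real) \<Rightarrow> ('s \<Rightarrow> 'x \<Rightarrow> real) \<Rightarrow> ('x \<Rightarrow> 'a \<Rightarrow> real) \<Rightarrow> ('x \<Rightarrow> real) \<Rightarrow> ('x \<times> 'a \<times> 'x) \<Rightarrow> real" where
  "mu2even f p q \<pi> \<mu> s = (case s of (x, a, x') \<Rightarrow>
      (\<Sum>y\<in>UNIV. \<Sum>b\<in>UNIV. \<mu> y * \<pi> y b * P_bmdp f p q y b x) * \<pi> x a * P_bmdp f p q x a x')"

end

theory Submission
  imports Defs
begin
lemma contraction:
  fixes Q :: "'st::finite \<Rightarrow> 'st \<Rightarrow> real" and d :: "'st \<Rightarrow> real"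
  assumes Qnn: "\<And>x y. 0 \<le> Q x y" and Qsum: "\<And>x. (\<Sum>y\<in>UNIV. Q x y) = 1"
    and Qratio: "\<And>x x' y. Q x y \<le> c * Q x' y" and c: "c \<ge> 1"
    and dsum: "(\<Sum>x\<in>UNIV. d x) = 0"
  shows "(\<Sum>y\<in>UNIV. \<bar>\<Sum>x\<in>UNIV. d x * Q x y\<bar>) \<le> (c-1)/(c+1) * (\<Sum>x\<in>UNIV. \<bar>d x\<bar>)"
proof -
  define dp where "dp = (\<lambda>x. max (d x) 0)"
  define dm where "dm = (\<lambda>x. max (- d x) 0)"
  have dpnn: "\<And>x. 0 \<le> dp x" and dmnn: "\<And>x. 0 \<le> dm x" by (auto simp: dp_def dm_def)
  have dd: "\<And>x. d x = dp x - dm x" and dabs: "\<And>x. \<bar>d x\<bar> = dp x + dm x"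
    by (auto simp: dp_def dm_def)
  define D where "D = (\<Sum>x\<in>UNIV. dp x)"
  have DM: "(\<Sum>x\<in>UNIV. dm x) = D"
    using dsum by (simp add: dd sum_subtractf D_def)
  define A where "A = (\<lambda>y. \<Sum>x\<in>UNIV. dp x * Q x y)"
  define B where "B = (\<lambda>y. \<Sum>x\<in>UNIV. dm x * Q x y)"
  have Ann: "0 \<le> A y" and Bnn: "0 \<le> B y" for y
    unfolding A_def B_def by (auto intro!: sum_nonneg simp: dpnn dmnn Qnn)
  have gen: "(\<Sum>x\<in>UNIV. u x * Q x y) \<le> c * (\<Sum>x\<in>UNIV. v x * Q x y)"
    if unn: "\<And>x. 0 \<le> u x" and vnn: "\<And>x. 0 \<le> v x"
      and eq: "(\<Sum>x\<in>UNIV. u x) = (\<Sum>x\<in>UNIV. v x)" for u v y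
  proof -
    define E where "E = (\<Sum>x\<in>UNIV. u x)"
    have E0: "0 \<le> E" unfolding E_def by (auto intro: sum_nonneg unn)
    have "(\<Sum>x\<in>UNIV. u x * Q x y) * E = (\<Sum>x\<in>UNIV. \<Sum>x'\<in>UNIV. u x * v x' * Q x y)"
      unfolding E_def eq by (simp add: sum_distrib_left sum_distrib_right mult_ac)
    also have "\<dots> \<le> (\<Sum>x\<in>UNIV. \<Sum>x'\<in>UNIV. u x * v x' * (c * Q x' y))"
      by (intro sum_mono mult_left_mono Qratio) (auto simp: unn vnn)
    also have "\<dots> = (\<Sum>x'\<in>UNIV. \<Sum>x\<in>UNIV. u x * v x' * (c * Q x' y))"
      by (rule sum.swap)
    also have "\<dots> = (c * (\<Sum>x\<in>UNIV. v x * Q x y)) * E"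
      unfolding E_def by (simp add: sum_distrib_left sum_distrib_right mult_ac)
    finally have le: "(\<Sum>x\<in>UNIV. u x * Q x y) * E \<le> (c * (\<Sum>x\<in>UNIV. v x * Q x y)) * E" .
    show ?thesis
    proof (cases "E = 0")
      case True
      then have "\<forall>x\<in>UNIV. u x = 0" unfolding E_def
        using sum_nonneg_eq_0_iff[of UNIV u] unn by auto
      then have "(\<Sum>x\<in>UNIV. u x * Q x y) = 0" by simp
      moreover have "0 \<le> (\<Sum>x\<in>UNIV. v x * Q x y)" by (auto intro!: sum_nonneg simp: vnn Qnn)
      ultimately show ?thesis using c by simp
    next
      case False
      with E0 have "E > 0" by simp
      with le show ?thesis by simp
    qed
  qed
  have AB: "A y \<le> c * B y" for y unfolding A_def B_def
    by (rule gen) (auto simp: dpnn dmnn DM D_def)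
  have BA: "B y \<le> c * A y" for y unfolding A_def B_def
    by (rule gen) (auto simp: dpnn dmnn DM D_def)
  have pt: "\<bar>A y - B y\<bar> \<le> (c-1)/(c+1) * (A y + B y)" for y
  proof -
    have "(c+1) * \<bar>A y - B y\<bar> \<le> (c-1) * (A y + B y)"
      using AB[of y] BA[of y] Ann[of y] Bnn[of y] by (auto simp: abs_if algebra_simps)
    then show ?thesis using c by (simp add: field_simps)
  qed
  have "(\<Sum>y\<in>UNIV. \<bar>\<Sum>x\<in>UNIV. d x * Q x y\<bar>) = (\<Sum>y\<in>UNIV. \<bar>A y - B y\<bar>)"
    unfolding A_def B_def by (simp add: dd left_diff_distrib sum_subtractf)
  also have "\<dots> \<le> (\<Sum>y\<in>UNIV. (c-1)/(c+1) * (A y + B y))"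
    by (intro sum_mono pt)
  also have "\<dots> = (c-1)/(c+1) * (\<Sum>y\<in>UNIV. A y + B y)"
    by (simp add: sum_distrib_left)
  also have "(\<Sum>y\<in>UNIV. A y + B y) = (\<Sum>x\<in>UNIV. \<bar>d x\<bar>)"
  proof -
    have "(\<Sum>y\<in>UNIV. A y + B y) = (\<Sum>y\<in>UNIV. \<Sum>x\<in>UNIV. (dp x + dm x) * Q x y)"
      unfolding A_def B_def by (simp add: sum.distrib distrib_right)
    also have "\<dots> = (\<Sum>x\<in>UNIV. (dp x + dm x) * (\<Sum>y\<in>UNIV. Q x y))"
      by (subst sum.swap) (simp add: sum_distrib_left)
    also have "\<dots> = (\<Sum>x\<in>UNIV. \<bar>d x\<bar>)" by (simp add: Qsum dabs)
    finally show ?thesis .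
  qed
  finally show ?thesis .
qed

lemma mc_dist_Suc: "mc_dist \<nu> Q (Suc h) = mc_step (mc_dist \<nu> Q h) Q"
  by (simp add: mc_dist_def)

lemma mc_dist_0: "mc_dist \<nu> Q 0 = \<nu>"
  by (simp add: mc_dist_def)

lemma mc_step_sum:
  assumes Qsum: "\<And>x. (\<Sum>y\<in>UNIV. Q x y) = 1"
  shows "(\<Sum>y\<in>UNIV. mc_step \<nu> Q y) = (\<Sum>x\<in>UNIV. \<nu> x)"
  unfolding mc_step_def by (subst sum.swap) (simp add: sum_distrib_left[symmetric] Qsum)

lemma binom_lower:
  fixes u :: real assumes "u \<ge> 0"
  shows "(1+u)^h \<ge> 1 + real h * u + real h * (real h - 1) / 2 * u^2"
proof (induction h)
  case 0 then show ?case by simp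
next
  case (Suc h)
  have "(1+u)^Suc h = (1+u) * (1+u)^h" by simp
  also have "\<dots> \<ge> (1+u) * (1 + real h * u + real h * (real h - 1) / 2 * u^2)"
    using Suc assms by (intro mult_left_mono) auto
  finally have le: "(1+u) * (1 + real h * u + real h * (real h - 1) / 2 * u^2) \<le> (1+u)^Suc h" .
  have "1 + real (Suc h) * u + real (Suc h) * (real (Suc h) - 1) / 2 * u^2
      \<le> (1+u) * (1 + real h * u + real h * (real h - 1) / 2 * u^2)"
  proof -
    have "0 \<le> real h * (real h - 1) / 2 * u^3"
    proof (cases h)
      case 0 then show ?thesis by simp
    next
      case (Suc k) then show ?thesis using assms by (auto intro!: mult_nonneg_nonneg)
    qed
    moreover have "(1+u) * (1 + real h * u + real h * (real h - 1) / 2 * u^2) = 1 + real (Suc h) * u + real (Suc h) * (real (Suc h) - 1) / 2 * u^2 + real h * (real h - 1) / 2 * u^3"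
      by (simp add: field_simps power2_eq_square power3_eq_cube)
    ultimately show ?thesis by linarith
  qed
  with le show ?case by linarith
qed

lemma numeric:
  fixes c :: real assumes c: "c > 1" and h: "real h \<ge> c" "h \<ge> 2"
  shows "((c-1)/(c+1))^h \<le> 1/4"
proof -
  define u where "u = 2/(c-1)"
  have u0: "u > 0" using c by (simp add: u_def)
  have base: "(c-1)/(c+1) = 1/(1+u)" using c by (simp add: u_def field_simps)
  have hu: "real h * u \<ge> 2" using c h by (simp add: u_def field_simps)
  have hh: "real h * (real h - 1) \<ge> c * (c - 1)" using c h by (intro mult_mono) auto
  have "real h * (real h - 1) / 2 * u^2 \<ge> c * (c-1) / 2 * u^2"
    using hh by (intro mult_right_mono divide_right_mono) auto
  moreover have "c * (c-1) / 2 * u^2 = 2 * c / (c-1)"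
  proof -
    have ne: "c - 1 \<noteq> 0" using c by simp
    have "c * (c-1) / 2 * u^2 = (2 * c) * ((c-1) / (c-1)) / (c-1)"
      by (simp add: u_def power2_eq_square)
    also have "\<dots> = 2 * c / (c-1)" using ne by simp
    finally show ?thesis .
  qed
  moreover have "2 * c / (c-1) \<ge> 1" using c by (simp add: field_simps)
  ultimately have q: "real h * (real h - 1) / 2 * u^2 \<ge> 1" by linarith
  have "(1+u)^h \<ge> 4" using binom_lower[of u h] u0 hu q by linarith
  then have "1/(1+u)^h \<le> 1/4" by (simp add: field_simps)
  then show ?thesis by (simp add: base power_one_over)
qed

lemma mixing_bound:
  fixes Q :: "'st::finite \<Rightarrow> 'st \<Rightarrow> real" and \<nu> :: "'st \<Rightarrow> real"
  assumes Qnn: "\<And>x y. 0 \<le> Q x y" and Qsum: "\<And>x. (\<Sum>y\<in>UNIV. Q x y) = 1"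
    and Qratio: "\<And>x x' y. Q x y \<le> c * Q x' y" and c: "c > 1"
    and nunn: "\<And>x. 0 \<le> \<nu> x" and nusum: "(\<Sum>x\<in>UNIV. \<nu> x) = 1"
    and st: "stationary_dist Q \<Pi>"
  shows "mixing_time_finite \<nu> Q \<Pi> \<and> real (mixing_time \<nu> Q \<Pi>) \<le> c + 1"
proof -
  from st have Pnn: "\<And>x. 0 \<le> \<Pi> x" and Psum: "(\<Sum>x\<in>UNIV. \<Pi> x) = 1"
    and Pst: "mc_step \<Pi> Q = \<Pi>" by (auto simp: stationary_dist_def)
  define \<delta> where "\<delta> = (c-1)/(c+1)"
  have d0: "0 \<le> \<delta>" using c by (simp add: \<delta>_def)
  have ind: "(\<Sum>x\<in>UNIV. mc_dist \<nu> Q h x) = 1 \<and>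
      (\<Sum>x\<in>UNIV. \<bar>mc_dist \<nu> Q h x - \<Pi> x\<bar>) \<le> \<delta>^h * (\<Sum>x\<in>UNIV. \<bar>\<nu> x - \<Pi> x\<bar>)" for h
  proof (induction h)
    case 0 then show ?case by (simp add: mc_dist_0 nusum)
  next
    case (Suc h)
    let ?m = "mc_dist \<nu> Q h"
    have s1: "(\<Sum>x\<in>UNIV. mc_dist \<nu> Q (Suc h) x) = 1"
      using Suc by (simp add: mc_dist_Suc mc_step_sum[OF Qsum])
    have "(\<Sum>x\<in>UNIV. \<bar>mc_dist \<nu> Q (Suc h) x - \<Pi> x\<bar>)
        = (\<Sum>y\<in>UNIV. \<bar>\<Sum>x\<in>UNIV. (?m x - \<Pi> x) * Q x y\<bar>)"
    proof -
      have "mc_dist \<nu> Q (Suc h) y - \<Pi> y = (\<Sum>x\<in>UNIV. (?m x - \<Pi> x) * Q x y)" for y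
      proof -
        have "\<Pi> y = mc_step \<Pi> Q y" using Pst by simp
        then show ?thesis
          by (simp add: mc_dist_Suc mc_step_def left_diff_distrib sum_subtractf)
      qed
      then show ?thesis by simp
    qed
    also have "\<dots> \<le> \<delta> * (\<Sum>x\<in>UNIV. \<bar>?m x - \<Pi> x\<bar>)"
      unfolding \<delta>_def
      by (rule contraction[OF Qnn Qsum Qratio]) (use c Suc Psum in \<open>auto simp: sum_subtractf\<close>)
    also have "\<dots> \<le> \<delta> * (\<delta>^h * (\<Sum>x\<in>UNIV. \<bar>\<nu> x - \<Pi> x\<bar>))"
      using Suc d0 by (intro mult_left_mono) auto
    finally show ?case using s1 by simp
  qed
  have init: "(\<Sum>x\<in>UNIV. \<bar>\<nu> x - \<Pi> x\<bar>) \<le> 2"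
  proof -
    have "(\<Sum>x\<in>UNIV. \<bar>\<nu> x - \<Pi> x\<bar>) \<le> (\<Sum>x\<in>UNIV. \<nu> x + \<Pi> x)"
      by (intro sum_mono) (use nunn Pnn in \<open>auto simp: abs_if\<close>)
    also have "\<dots> = 2" by (simp add: sum.distrib nusum Psum)
    finally show ?thesis .
  qed
  define h0 where "h0 = nat \<lfloor>c\<rfloor> + 1"
  have h0c: "real h0 \<ge> c" unfolding h0_def using c by linarith
  have h0c': "real h0 \<le> c + 1" unfolding h0_def using c by linarith
  have h02: "h0 \<ge> 2" unfolding h0_def using c by linarith
  have "\<delta>^h0 * (\<Sum>x\<in>UNIV. \<bar>\<nu> x - \<Pi> x\<bar>) \<le> \<delta>^h0 * 2"
    using init d0 by (intro mult_left_mono) auto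
  then have "(\<Sum>x\<in>UNIV. \<bar>mc_dist \<nu> Q h0 x - \<Pi> x\<bar>) \<le> \<delta>^h0 * 2"
    using ind[of h0] by linarith
  then have "d_TV (mc_dist \<nu> Q h0) \<Pi> \<le> 1/2 * (\<delta>^h0 * 2)"
    unfolding d_TV_def by simp
  also have "\<dots> = \<delta>^h0" by simp
  also have "\<dots> \<le> 1/4" unfolding \<delta>_def using numeric[OF c h0c h02] .
  finally have dt: "d_TV (mc_dist \<nu> Q h0) \<Pi> \<le> 1/4" .
  have "1 \<le> h0" using h02 by simp
  with dt have fin: "mixing_time_finite \<nu> Q \<Pi>" unfolding mixing_time_finite_def by blast
  have "mixing_time \<nu> Q \<Pi> \<le> h0" unfolding mixing_time_def
    using dt \<open>1 \<le> h0\<close> by (intro Least_le) auto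
  then have "real (mixing_time \<nu> Q \<Pi>) \<le> c + 1" using h0c' by linarith
  with fin show ?thesis by blast
qed


lemma sum_UNIV_prod: "(\<Sum>z\<in>(UNIV::('u::finite \<times> 'v::finite) set). g z) = (\<Sum>a\<in>UNIV. \<Sum>b\<in>UNIV. g (a,b))"
  unfolding sum.cartesian_product by (simp add: UNIV_Times_UNIV case_prod_beta')

theorem proposition5:
  fixes f :: "'x::finite \<Rightarrow> 's::finite"
    and p :: "'s \<Rightarrow> 'a::finite \<Rightarrow> 's \<Rightarrow> real"
    and q :: "'s \<Rightarrow> 'x \<Rightarrow> real"
    and \<pi> :: "'x \<Rightarrow> 'a \<Rightarrow> real"
    and \<mu> :: "'x \<Rightarrow> real"
    and \<eta> :: real
  assumes p_nonneg: "\<And>s a s'. 0 \<le> p s a s'"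
    and p_sum: "\<And>s a. (\<Sum>s'\<in>UNIV. p s a s') = 1"
    and q_nonneg: "\<And>s x. 0 \<le> q s x"
    and q_sum: "\<And>s. (\<Sum>x\<in>UNIV. q s x) = 1"
    and q_supp: "\<And>s x. f x \<noteq> s \<Longrightarrow> q s x = 0"
    and pi_nonneg: "\<And>x a. 0 \<le> \<pi> x a"
    and pi_sum: "\<And>x. (\<Sum>a\<in>UNIV. \<pi> x a) = 1"
    and alpha_pos: "\<And>s. alpha f s > 0"
    \<comment> \<open>(A2)\<close>
    and eta_gt: "\<eta> > 1"
    and A2_alpha: "\<And>s1 s2. alpha f s1 \<le> \<eta> * alpha f s2"
    and A2_p1: "\<And>s1 s2 s3 a. p s1 a s2 \<le> \<eta> * p s1 a s3"
    and A2_p2: "\<And>s1 s2 s3 a. p s2 a s1 \<le> \<eta> * p s3 a s1"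
    and A2_q: "\<And>s x y. f x = s \<Longrightarrow> f y = s \<Longrightarrow> q s x \<le> \<eta> * q s y"
    and A2_pi: "\<And>a1 a2 x y. \<pi> x a1 \<le> \<eta> * \<pi> y a2"
    \<comment> \<open>(A3)\<close>
    and A3: "\<And>x. \<mu> x = 1 / real (card (UNIV :: 'x set))"
  shows "(\<forall>\<Pi>. stationary_dist (P0 f p q \<pi>) \<Pi> \<longrightarrow>
            mixing_time_finite \<mu> (P0 f p q \<pi>) \<Pi> \<and>
            real (mixing_time \<mu> (P0 f p q \<pi>) \<Pi>) \<le> 2 * \<eta>^2)
       \<and> (\<forall>\<Pi>. stationary_dist (P1 f p q \<pi>) \<Pi> \<longrightarrow>
            mixing_time_finite (mu1 f p q \<pi> \<mu>) (P1 f p q \<pi>) \<Pi> \<and>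
            real (mixing_time (mu1 f p q \<pi> \<mu>) (P1 f p q \<pi>) \<Pi>) \<le> 2 * \<eta>^2)
       \<and> (\<forall>\<Pi>. stationary_dist (P2sq f p q \<pi>) \<Pi> \<longrightarrow>
            mixing_time_finite (mu2odd f p q \<pi> \<mu>) (P2sq f p q \<pi>) \<Pi> \<and>
            real (mixing_time (mu2odd f p q \<pi> \<mu>) (P2sq f p q \<pi>) \<Pi>) \<le> \<eta>^2 + 1)
       \<and> (\<forall>\<Pi>. stationary_dist (P2sq f p q \<pi>) \<Pi> \<longrightarrow>
            mixing_time_finite (mu2even f p q \<pi> \<mu>) (P2sq f p q \<pi>) \<Pi> \<and>
            real (mixing_time (mu2even f p q \<pi> \<mu>) (P2sq f p q \<pi>) \<Pi>) \<le> \<eta>^2 + 1)"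
proof -
  let ?P = "P_bmdp f p q"
  have eta0: "0 \<le> \<eta>" using eta_gt by simp
  have Pnn: "0 \<le> ?P x a y" for x a y by (simp add: P_bmdp_def q_nonneg p_nonneg)
  have Psum: "(\<Sum>y\<in>UNIV. ?P x a y) = 1" for x a
  proof -
    have "?P x a y = (\<Sum>s\<in>UNIV. q s y * p (f x) a s)" for y
    proof -
      have "(\<Sum>s\<in>UNIV. q s y * p (f x) a s) = (\<Sum>s\<in>UNIV. if s = f y then q (f y) y * p (f x) a (f y) else 0)"
        by (rule sum.cong) (auto simp: q_supp)
      then show ?thesis by (simp add: P_bmdp_def)
    qed
    then have "(\<Sum>y\<in>UNIV. ?P x a y) = (\<Sum>y\<in>UNIV. \<Sum>s\<in>UNIV. q s y * p (f x) a s)" by simp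
    also have "\<dots> = (\<Sum>s\<in>UNIV. p (f x) a s * (\<Sum>y\<in>UNIV. q s y))"
      by (subst sum.swap) (simp add: sum_distrib_left sum_distrib_right mult_ac)
    also have "\<dots> = 1" by (simp add: q_sum p_sum)
    finally show ?thesis .
  qed
  have trm: "\<pi> x a * ?P x a y \<le> \<eta>^2 * (\<pi> x' a * ?P x' a y)" for x x' a y
  proof -
    have "\<pi> x a * p (f x) a (f y) \<le> (\<eta> * \<pi> x' a) * (\<eta> * p (f x') a (f y))"
      by (intro mult_mono A2_pi A2_p2) (auto simp: pi_nonneg p_nonneg eta0)
    then have "q (f y) y * (\<pi> x a * p (f x) a (f y)) \<le> q (f y) y * ((\<eta> * \<pi> x' a) * (\<eta> * p (f x') a (f y)))"
      by (intro mult_left_mono) (auto simp: q_nonneg)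
    then show ?thesis by (simp add: P_bmdp_def power2_eq_square mult_ac)
  qed
  have c1: "\<eta>^2 > 1" using eta_gt by (simp add: one_less_power)
  have c2: "\<eta>^2 + 1 \<le> 2 * \<eta>^2" using c1 by simp
  have card0: "real (card (UNIV :: 'x set)) > 0" by (simp add: card_gt_0_iff)
  have munn: "0 \<le> \<mu> x" for x by (simp add: A3)
  have musum: "(\<Sum>x\<in>UNIV. \<mu> x) = 1" using card0 by (simp add: A3)
  have rowsum0: "(\<Sum>y\<in>UNIV. \<Sum>a\<in>UNIV. \<pi> x a * ?P x a y) = 1" for x
    by (subst sum.swap) (simp add: sum_distrib_left[symmetric] Psum pi_sum)
  have rowsum0': "(\<Sum>a\<in>UNIV. \<Sum>y\<in>UNIV. \<pi> x a * ?P x a y) = 1" for x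
    by (simp add: sum_distrib_left[symmetric] Psum pi_sum)
  have part0: "\<forall>\<Pi>. stationary_dist (P0 f p q \<pi>) \<Pi> \<longrightarrow>
            mixing_time_finite \<mu> (P0 f p q \<pi>) \<Pi> \<and>
            real (mixing_time \<mu> (P0 f p q \<pi>) \<Pi>) \<le> 2 * \<eta>^2"
  proof (intro allI impI)
    fix \<Pi> assume st: "stationary_dist (P0 f p q \<pi>) \<Pi>"
    have "mixing_time_finite \<mu> (P0 f p q \<pi>) \<Pi> \<and> real (mixing_time \<mu> (P0 f p q \<pi>) \<Pi>) \<le> \<eta>^2 + 1"
    proof (rule mixing_bound[OF _ _ _ c1 munn musum st])
      show "0 \<le> P0 f p q \<pi> x y" for x y unfolding P0_def
        by (auto intro!: sum_nonneg simp: pi_nonneg Pnn)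
      show "(\<Sum>y\<in>UNIV. P0 f p q \<pi> x y) = 1" for x unfolding P0_def by (rule rowsum0)
      show "P0 f p q \<pi> x y \<le> \<eta>^2 * P0 f p q \<pi> x' y" for x x' y unfolding P0_def
        by (simp add: sum_distrib_left) (intro sum_mono trm)
    qed
    with c2 show "mixing_time_finite \<mu> (P0 f p q \<pi>) \<Pi> \<and>
            real (mixing_time \<mu> (P0 f p q \<pi>) \<Pi>) \<le> 2 * \<eta>^2" by linarith
  qed
  have part1: "\<forall>\<Pi>. stationary_dist (P1 f p q \<pi>) \<Pi> \<longrightarrow>
            mixing_time_finite (mu1 f p q \<pi> \<mu>) (P1 f p q \<pi>) \<Pi> \<and>
            real (mixing_time (mu1 f p q \<pi> \<mu>) (P1 f p q \<pi>) \<Pi>) \<le> 2 * \<eta>^2"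
  proof (intro allI impI)
    fix \<Pi> assume st: "stationary_dist (P1 f p q \<pi>) \<Pi>"
    have "mixing_time_finite (mu1 f p q \<pi> \<mu>) (P1 f p q \<pi>) \<Pi> \<and> real (mixing_time (mu1 f p q \<pi> \<mu>) (P1 f p q \<pi>) \<Pi>) \<le> \<eta>^2 + 1"
    proof (rule mixing_bound[OF _ _ _ c1 _ _ st])
      show "0 \<le> P1 f p q \<pi> x y" for x y unfolding P1_def
        by (auto split: prod.splits simp: pi_nonneg Pnn)
      show "(\<Sum>y\<in>UNIV. P1 f p q \<pi> x y) = 1" for x
        by (cases x) (simp add: sum_UNIV_prod P1_def rowsum0[symmetric] sum_distrib_left[symmetric] Psum pi_sum)
      show "P1 f p q \<pi> x y \<le> \<eta>^2 * P1 f p q \<pi> x' y" for x x' y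
        by (cases x; cases x'; cases y) (simp add: P1_def trm)
      show "0 \<le> mu1 f p q \<pi> \<mu> x" for x unfolding mu1_def
        by (auto split: prod.splits intro!: sum_nonneg simp: pi_nonneg Pnn munn)
      have "(\<Sum>x\<in>UNIV. mu1 f p q \<pi> \<mu> x) = (\<Sum>a\<in>UNIV. \<Sum>x\<in>UNIV. \<Sum>y\<in>UNIV. \<mu> y * \<pi> y a * ?P y a x)"
        by (simp add: sum_UNIV_prod mu1_def)
      also have "\<dots> = (\<Sum>y\<in>UNIV. \<mu> y * (\<Sum>a\<in>UNIV. \<Sum>x\<in>UNIV. \<pi> y a * ?P y a x))"
        by (subst sum.swap, subst (2) sum.swap) (simp add: sum_distrib_left mult_ac)
      also have "\<dots> = 1" by (simp add: rowsum0' musum)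
      finally show "(\<Sum>x\<in>UNIV. mu1 f p q \<pi> \<mu> x) = 1" .
    qed
    with c2 show "mixing_time_finite (mu1 f p q \<pi> \<mu>) (P1 f p q \<pi>) \<Pi> \<and>
            real (mixing_time (mu1 f p q \<pi> \<mu>) (P1 f p q \<pi>) \<Pi>) \<le> 2 * \<eta>^2" by linarith
  qed
  have Q2nn: "0 \<le> P2sq f p q \<pi> x y" for x y unfolding P2sq_def
    by (auto split: prod.splits intro!: sum_nonneg simp: pi_nonneg Pnn)
  have Q2sum: "(\<Sum>y\<in>UNIV. P2sq f p q \<pi> x y) = 1" for x
  proof (cases x)
    case (fields x1 a1 x2)
    have "(\<Sum>y\<in>UNIV. P2sq f p q \<pi> x y) = (\<Sum>y\<in>UNIV. \<Sum>b\<in>UNIV. \<Sum>y'\<in>UNIV. \<Sum>a'\<in>UNIV.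
        (\<pi> x2 a' * ?P x2 a' y) * (\<pi> y b * ?P y b y'))"
      by (simp add: fields sum_UNIV_prod P2sq_def mult_ac)
    also have "\<dots> = (\<Sum>y\<in>UNIV. (\<Sum>a'\<in>UNIV. \<pi> x2 a' * ?P x2 a' y) * (\<Sum>y'\<in>UNIV. \<Sum>b\<in>UNIV. \<pi> y b * ?P y b y'))"
      by (subst sum.swap) (simp add: sum_distrib_left sum_distrib_right)
    also have "\<dots> = 1" by (simp add: rowsum0' rowsum0)
    finally show ?thesis .
  qed
  have Q2ratio: "P2sq f p q \<pi> x y \<le> \<eta>^2 * P2sq f p q \<pi> x' y" for x x' y
  proof -
    obtain x1 a1 x2 where x: "x = (x1, a1, x2)" by (cases x) auto
    obtain z1 b1 z2 where x': "x' = (z1, b1, z2)" by (cases x') auto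
    obtain y1 b y2 where y: "y = (y1, b, y2)" by (cases y) auto
    have "(\<Sum>a'\<in>UNIV. (\<pi> y1 b * ?P y1 b y2) * (\<pi> x2 a' * ?P x2 a' y1))
        \<le> (\<Sum>a'\<in>UNIV. (\<pi> y1 b * ?P y1 b y2) * (\<eta>^2 * (\<pi> z2 a' * ?P z2 a' y1)))"
      by (intro sum_mono mult_left_mono trm) (simp add: pi_nonneg Pnn)
    then show ?thesis by (simp add: x x' y P2sq_def sum_distrib_left mult_ac)
  qed
  have part2: "\<forall>\<Pi>. stationary_dist (P2sq f p q \<pi>) \<Pi> \<longrightarrow>
            mixing_time_finite (mu2odd f p q \<pi> \<mu>) (P2sq f p q \<pi>) \<Pi> \<and>
            real (mixing_time (mu2odd f p q \<pi> \<mu>) (P2sq f p q \<pi>) \<Pi>) \<le> \<eta>^2 + 1"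
  proof (intro allI impI)
    fix \<Pi> assume st: "stationary_dist (P2sq f p q \<pi>) \<Pi>"
    show "mixing_time_finite (mu2odd f p q \<pi> \<mu>) (P2sq f p q \<pi>) \<Pi> \<and> real (mixing_time (mu2odd f p q \<pi> \<mu>) (P2sq f p q \<pi>) \<Pi>) \<le> \<eta>^2 + 1"
    proof (rule mixing_bound[OF Q2nn Q2sum Q2ratio c1 _ _ st])
      show "0 \<le> mu2odd f p q \<pi> \<mu> x" for x unfolding mu2odd_def
        by (auto split: prod.splits simp: pi_nonneg Pnn munn)
      have "(\<Sum>x\<in>UNIV. mu2odd f p q \<pi> \<mu> x) = (\<Sum>x\<in>UNIV. \<mu> x * (\<Sum>a\<in>UNIV. \<Sum>x'\<in>UNIV. \<pi> x a * ?P x a x'))"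
        by (simp add: sum_UNIV_prod mu2odd_def sum_distrib_left mult_ac)
      also have "\<dots> = 1" using rowsum0 by (subst (asm) sum.swap) (simp add: musum)
      finally show "(\<Sum>x\<in>UNIV. mu2odd f p q \<pi> \<mu> x) = 1" .
    qed
  qed
  have part3: "\<forall>\<Pi>. stationary_dist (P2sq f p q \<pi>) \<Pi> \<longrightarrow>
            mixing_time_finite (mu2even f p q \<pi> \<mu>) (P2sq f p q \<pi>) \<Pi> \<and>
            real (mixing_time (mu2even f p q \<pi> \<mu>) (P2sq f p q \<pi>) \<Pi>) \<le> \<eta>^2 + 1"
  proof (intro allI impI)
    fix \<Pi> assume st: "stationary_dist (P2sq f p q \<pi>) \<Pi>"
    define w where "w = (\<lambda>x. \<Sum>y\<in>UNIV. \<Sum>b\<in>UNIV. \<mu> y * \<pi> y b * ?P y b x)"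
    have wnn: "0 \<le> w x" for x unfolding w_def
      by (auto intro!: sum_nonneg simp: pi_nonneg Pnn munn)
    have wsum: "(\<Sum>x\<in>UNIV. w x) = 1"
    proof -
      have "(\<Sum>x\<in>UNIV. w x) = (\<Sum>y\<in>UNIV. \<mu> y * (\<Sum>x\<in>UNIV. \<Sum>b\<in>UNIV. \<pi> y b * ?P y b x))"
        unfolding w_def by (subst sum.swap) (simp add: sum_distrib_left mult_ac)
      also have "\<dots> = 1" by (simp add: rowsum0 musum)
      finally show ?thesis .
    qed
    show "mixing_time_finite (mu2even f p q \<pi> \<mu>) (P2sq f p q \<pi>) \<Pi> \<and> real (mixing_time (mu2even f p q \<pi> \<mu>) (P2sq f p q \<pi>) \<Pi>) \<le> \<eta>^2 + 1"
    proof (rule mixing_bound[OF Q2nn Q2sum Q2ratio c1 _ _ st])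
      show "0 \<le> mu2even f p q \<pi> \<mu> x" for x unfolding mu2even_def
        using wnn unfolding w_def
        by (auto split: prod.splits simp: pi_nonneg Pnn munn)
      have me: "mu2even f p q \<pi> \<mu> (x, a, x') = w x * (\<pi> x a * ?P x a x')" for x a x'
        by (simp add: mu2even_def w_def)
      have "(\<Sum>x\<in>UNIV. mu2even f p q \<pi> \<mu> x) = (\<Sum>x\<in>UNIV. w x * (\<Sum>a\<in>UNIV. \<Sum>x'\<in>UNIV. \<pi> x a * ?P x a x'))"
        by (simp add: sum_UNIV_prod me sum_distrib_left)
      also have "\<dots> = 1" by (simp add: rowsum0' wsum)
      finally show "(\<Sum>x\<in>UNIV. mu2even f p q \<pi> \<mu> x) = 1" .
    qed
  qed
  show ?thesis using part0 part1 part2 part3 by blast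
qed

end
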